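(* Let $0<s_1<s_2$ and $m\ge1$. The defect capacitance matrix $\mathcal C\in\mathbb R^{(4m+1)\times(4m+1)}$ has at most one eigenvalue in the interval $\Gamma=\big(\frac{2}{s_2},\frac{2}{s_1}\big)$. Moreover, for all $m$ sufficiently large it has exactly one eigenvalue in $\Gamma$.
   Context: Set $\alpha=\frac1{s_1}+\frac1{s_2}$, $\beta_1=-\frac1{s_1}$, $\beta_2=-\frac1{s_2}$, $\eta=\frac2{s_2}$. The defect capacitance matrix $\mathcal C$ ($N=4m+1$) is the real symmetric tridiagonal matrix with diagonal entries $\mathcal C_{11}=\mathcal C_{NN}=\frac1{s_1}$, $\mathcal C_{2m+1,2m+1}=\eta$, $\mathcal C_{ii}=\alpha$ otherwise, and off-diagonal entries $\mathcal C_{i,i+1}=\mathcal C_{i+1,i}$ equal to $\beta_1$ ($i$ odd) and $\beta_2$ ($i$ even) for $1\le i\le 2m$, and $\beta_2$ ($i$ odd) and $\beta_1$ ($i$ even) for $2m+1\le i\le 4m$. It is the capacitance matrix of a chain of $4m+1$ identical resonators with spacings $s_i$ equal to $s_1$ ($i$ odd), $s_2$ ($i$ even) for $i\le 2m$ and $s_2$ ($i$ odd), $s_1$ ($i$ even) for $2m+1\le i\le 4m$. $\Gamma$ is the gap between the two spectral bands of the corresponding infinite periodic dimer chain. *)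

theory Defs
  imports "Jordan_Normal_Form.Matrix" "Jordan_Normal_Form.Jordan_Normal_Form"
begin

text \<open>Entries of the defect capacitance matrix, with the paper's 1-based indices
  i, j in {1..4m+1}.\<close>
definition cap_entry :: "real \<Rightarrow> real \<Rightarrow> nat \<Rightarrow> nat \<Rightarrow> nat \<Rightarrow> real" where
  "cap_entry s1 s2 m i j =
     (let N = 4*m+1; \<alpha> = 1/s1 + 1/s2; \<beta>1 = -1/s1; \<beta>2 = -1/s2; \<eta> = 2/s2 in
      if i = j then
        (if i = 1 \<or> i = N then 1/s1 else if i = 2*m+1 then \<eta> else \<alpha>)
      else if j = i + 1 \<or> i = j + 1 then
        (let k = min i j in
         if k \<le> 2*m then (if odd k then \<beta>1 else \<beta>2)
         else (if odd k then \<beta>2 else \<beta>1))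
      else 0)"

definition defect_cap :: "real \<Rightarrow> real \<Rightarrow> nat \<Rightarrow> real mat" where
  "defect_cap s1 s2 m = mat (4*m+1) (4*m+1) (\<lambda>(i,j). cap_entry s1 s2 m (i+1) (j+1))"

end

theory Submission
  imports Defs
begin

definition bnd :: "real \<Rightarrow> real \<Rightarrow> nat \<Rightarrow> nat \<Rightarrow> real" where
  "bnd a b m i = (if i < 2*m then (if even i then -a else -b) else (if even i then -b else -a))"

definition ce :: "real \<Rightarrow> real \<Rightarrow> nat \<Rightarrow> nat \<Rightarrow> nat \<Rightarrow> real" where
  "ce a b m i j = (if i = j then (if i = 0 \<or> i = 4*m then a else if i = 2*m then 2*b else a+b)
     else if j = Suc i then bnd a b m i else if i = Suc j then bnd a b m j else 0)"

lemma cap_ce: "cap_entry s1 s2 m (Suc i) (Suc j) = ce (1/s1) (1/s2) m i j"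
  unfolding cap_entry_def ce_def bnd_def Let_def
  by (auto simp: min_def)

definition Rf :: "real \<Rightarrow> real \<Rightarrow> nat \<Rightarrow> (nat \<Rightarrow> real) \<Rightarrow> nat \<Rightarrow> real" where
  "Rf a b m x i = (\<Sum>j<4*m+1. ce a b m i j * x j)"

lemma Rf_eq:
  assumes "i < 4*m+1"
  shows "Rf a b m x i = (if 0 < i then bnd a b m (i-1) * x (i-1) else 0) + ce a b m i i * x i
     + (if i < 4*m then bnd a b m i * x (Suc i) else 0)"
proof -
  have "\<And>j. ce a b m i j * x j = (if j = i - 1 then (if 0 < i then bnd a b m (i-1) * x (i-1) else 0) else 0)
     + (if j = i then ce a b m i i * x i else 0) + (if j = Suc i then bnd a b m i * x (Suc i) else 0)"
    unfolding ce_def by auto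
  then have "Rf a b m x i = (\<Sum>j<4*m+1. (if j = i - 1 then (if 0 < i then bnd a b m (i-1) * x (i-1) else 0) else 0)
     + (if j = i then ce a b m i i * x i else 0) + (if j = Suc i then bnd a b m i * x (Suc i) else 0))"
    unfolding Rf_def by simp
  also have "\<dots> = (if i - 1 \<in> {..<4*m+1} then (if 0 < i then bnd a b m (i-1) * x (i-1) else 0) else 0)
     + (if i \<in> {..<4*m+1} then ce a b m i i * x i else 0) + (if Suc i \<in> {..<4*m+1} then bnd a b m i * x (Suc i) else 0)"
    by (simp only: sum.distrib sum.delta finite_lessThan)
  finally show ?thesis using assms by auto
qed


lemma sq_ineq:
  fixes a b p q :: real
  assumes "0 \<le> b" "b \<le> a"
  shows "a*(a-b)*q^2 - b*(a-b)*p^2 \<le> (b*p + a*q)^2"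
proof -
  have "(b*p + a*q)^2 - (a*(a-b)*q^2 - b*(a-b)*p^2) = a*b*(p+q)^2"
    by (simp add: power2_eq_square algebra_simps)
  moreover have "0 \<le> a*b*(p+q)^2" using assms by simp
  ultimately show ?thesis by linarith
qed

lemma pair_ind:
  fixes x :: "nat \<Rightarrow> real"
  assumes "0 \<le> b" "b \<le> a"
  shows "(a-b)^2 * (\<Sum>i<2*n. x i ^2) + b*(a-b)*((if n = 0 then x 0 else x(2*n-1))^2 - x(2*n)^2)
     \<le> (\<Sum>k<n. (b*(if k=0 then x 0 else x(2*k-1)) + a*x(2*k+1))^2 + (a*x(2*k) + b*x(2*k+2))^2)"
proof (induction n)
  case 0
  then show ?case by simp
next
  case (Suc n)
  let ?p = "(if n = 0 then x 0 else x(2*n-1))"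
  have i1: "a*(a-b)*x(2*n+1)^2 - b*(a-b)*?p^2 \<le> (b*?p + a*x(2*n+1))^2"
    using sq_ineq[OF assms] by blast
  have i2: "a*(a-b)*x(2*n)^2 - b*(a-b)*x(2*n+2)^2 \<le> (a*x(2*n) + b*x(2*n+2))^2"
    using sq_ineq[OF assms, of "x(2*n)" "x(2*n+2)"] by (simp add: algebra_simps)
  have s: "(\<Sum>i<2*Suc n. x i ^2) = (\<Sum>i<2*n. x i ^2) + x(2*n)^2 + x(2*n+1)^2"
    by simp
  have e: "(if Suc n = 0 then x 0 else x(2*Suc n-1)) = x(2*n+1)" by simp
  have e2: "x (2 * Suc n) = x(2*n+2)" by simp
  have "(a-b)^2 * (\<Sum>i<2*Suc n. x i ^2) + b*(a-b)*((if Suc n = 0 then x 0 else x(2*Suc n-1))^2 - x(2*Suc n)^2)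
     = ((a-b)^2 * (\<Sum>i<2*n. x i ^2) + b*(a-b)*(?p^2 - x(2*n)^2))
       + (a*(a-b)*x(2*n+1)^2 - b*(a-b)*?p^2) + (a*(a-b)*x(2*n)^2 - b*(a-b)*x(2*n+2)^2)"
    unfolding s e e2 by (simp add: power2_eq_square algebra_simps)
  also have "\<dots> \<le> (\<Sum>k<n. (b*(if k=0 then x 0 else x(2*k-1)) + a*x(2*k+1))^2 + (a*x(2*k) + b*x(2*k+2))^2)
      + (b*?p + a*x(2*n+1))^2 + (a*x(2*n) + b*x(2*n+2))^2"
    using Suc.IH i1 i2 by linarith
  finally show ?case by simp
qed

lemma sum_pairs: "(\<Sum>i<2*n. f i) = (\<Sum>k<n. f (2*k) + f (2*k+1))" for f :: "nat \<Rightarrow> real"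
  by (induction n) auto

lemma bnd_sym: "j < 4*m \<Longrightarrow> bnd a b m (4*m - Suc j) = bnd a b m j"
  unfolding bnd_def by (auto; presburger)

lemma ce_diag_sym: "i \<le> 4*m \<Longrightarrow> ce a b m (4*m - i) (4*m - i) = ce a b m i i"
  unfolding ce_def by auto

lemma Rf_refl:
  assumes "i < 4*m+1"
  shows "Rf a b m x (4*m - i) = Rf a b m (\<lambda>j. x (4*m - j)) i"
proof -
  have A: "Rf a b m x (4*m - i) = (if 0 < 4*m - i then bnd a b m (4*m - i - 1) * x (4*m - i - 1) else 0)
     + ce a b m (4*m - i) (4*m - i) * x (4*m - i) + (if 4*m - i < 4*m then bnd a b m (4*m - i) * x (Suc (4*m - i)) else 0)"
    by (rule Rf_eq) (use assms in auto)
  have B: "Rf a b m (\<lambda>j. x (4*m - j)) i = (if 0 < i then bnd a b m (i-1) * x (4*m - (i-1)) else 0) + ce a b m i i * x (4*m - i)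
     + (if i < 4*m then bnd a b m i * x (4*m - Suc i) else 0)"
    by (rule Rf_eq) (use assms in auto)
  have c1: "bnd a b m (4*m - i - 1) = bnd a b m i" if "i < 4*m"
  proof -
    have e: "4*m - i - 1 = 4*m - Suc i" by simp
    from bnd_sym[OF that, of a b] show ?thesis unfolding e .
  qed
  have c2: "bnd a b m (4*m - i) = bnd a b m (i-1)" if "0 < i"
  proof -
    have e: "4*m - Suc (i-1) = 4*m - i" using that by simp
    have "i - 1 < 4*m" using assms that by simp
    from bnd_sym[OF this, of a b] show ?thesis unfolding e .
  qed
  consider "i = 0" | "i = 4*m" | "0 < i \<and> i < 4*m" using assms by linarith
  then show ?thesis
  proof cases
    case 1
    then show ?thesis unfolding A B using c1 ce_diag_sym[of i m a b] by simp
  next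
    case 2
    then show ?thesis unfolding A B using c2 ce_diag_sym[of i m a b] by simp
  next
    case 3
    have e1: "Suc (4*m - i) = 4*m - (i-1)" "4*m - i - 1 = 4*m - Suc i" using 3 by auto
    have "0 < 4*m - i" "4*m - i < 4*m" using 3 by auto
    then have "Rf a b m x (4*m - i) = bnd a b m i * x (4*m - Suc i) + ce a b m i i * x (4*m - i) + bnd a b m (i-1) * x (4*m - (i-1))"
      unfolding A e1 using c1 c2 3 ce_diag_sym[of i m a b] by simp
    moreover have "Rf a b m (\<lambda>j. x (4*m - j)) i = bnd a b m (i-1) * x (4*m - (i-1)) + ce a b m i i * x (4*m - i) + bnd a b m i * x (4*m - Suc i)"
      unfolding B using 3 by simp
    ultimately show ?thesis by simp
  qed
qed

lemma ol_even:
  assumes "k < m"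
  shows "Rf a b m y (2*k) - (a+b) * y (2*k) = -(b*(if k=0 then y 0 else y(2*k-1)) + a*y(2*k+1))"
proof (cases "k = 0")
  case True
  have "Rf a b m y 0 = ce a b m 0 0 * y 0 + bnd a b m 0 * y 1" using Rf_eq[of 0 m a b y] assms by simp
  moreover have "ce a b m 0 0 = a" "bnd a b m 0 = -a" using assms unfolding ce_def bnd_def by auto
  ultimately show ?thesis using True by (simp add: algebra_simps)
next
  case False
  have r: "Rf a b m y (2*k) = bnd a b m (2*k-1) * y (2*k-1) + ce a b m (2*k) (2*k) * y (2*k) + bnd a b m (2*k) * y (Suc (2*k))"
    using Rf_eq[of "2*k" m a b y] assms False by simp
  have o: "odd (2*k-1)" using False by simp
  have "ce a b m (2*k) (2*k) = a + b" "bnd a b m (2*k) = -a" "bnd a b m (2*k-1) = -b"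
    using assms False o unfolding ce_def bnd_def by auto
  then show ?thesis using r False by (simp add: algebra_simps)
qed

lemma ol_odd:
  assumes "k < m"
  shows "Rf a b m y (2*k+1) - (a+b) * y (2*k+1) = -(a*y(2*k) + b*y(2*k+2))"
proof -
  have r: "Rf a b m y (2*k+1) = bnd a b m (2*k) * y (2*k) + ce a b m (2*k+1) (2*k+1) * y (2*k+1) + bnd a b m (2*k+1) * y (2*k+2)"
    using Rf_eq[of "2*k+1" m a b y] assms by simp
  have n4: "2*k+1 \<noteq> 4*m" by presburger
  have "ce a b m (2*k+1) (2*k+1) = a + b" "bnd a b m (2*k) = -a" "bnd a b m (2*k+1) = -b"
    using assms n4 unfolding ce_def bnd_def by auto
  then show ?thesis using r by (simp add: algebra_simps)
qed

lemma left_half: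
  assumes "0 < b" "b < a" "y (2*m) = 0"
  shows "(a-b)^2 * (\<Sum>i<2*m. y i ^2) \<le> (\<Sum>i<2*m. (Rf a b m y i - (a+b) * y i)^2)"
proof -
  have "(\<Sum>i<2*m. (Rf a b m y i - (a+b) * y i)^2)
     = (\<Sum>k<m. (Rf a b m y (2*k) - (a+b) * y (2*k))^2 + (Rf a b m y (2*k+1) - (a+b) * y (2*k+1))^2)"
    by (rule sum_pairs)
  also have "\<dots> = (\<Sum>k<m. (b*(if k=0 then y 0 else y(2*k-1)) + a*y(2*k+1))^2 + (a*y(2*k) + b*y(2*k+2))^2)"
  proof (rule sum.cong)
    fix k assume "k \<in> {..<m}"
    then have k: "k < m" by simp
    show "(Rf a b m y (2*k) - (a+b) * y (2*k))^2 + (Rf a b m y (2*k+1) - (a+b) * y (2*k+1))^2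
       = (b*(if k=0 then y 0 else y(2*k-1)) + a*y(2*k+1))^2 + (a*y(2*k) + b*y(2*k+2))^2"
      unfolding ol_even[OF k] ol_odd[OF k] power2_minus ..
  qed simp
  finally have eq: "(\<Sum>i<2*m. (Rf a b m y i - (a+b) * y i)^2)
     = (\<Sum>k<m. (b*(if k=0 then y 0 else y(2*k-1)) + a*y(2*k+1))^2 + (a*y(2*k) + b*y(2*k+2))^2)" .
  have P: "(a-b)^2 * (\<Sum>i<2*m. y i ^2) + b*(a-b)*((if m = 0 then y 0 else y(2*m-1))^2 - y(2*m)^2)
     \<le> (\<Sum>k<m. (b*(if k=0 then y 0 else y(2*k-1)) + a*y(2*k+1))^2 + (a*y(2*k) + b*y(2*k+2))^2)"
    by (rule pair_ind) (use assms in auto)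
  have "0 \<le> b*(a-b)*((if m = 0 then y 0 else y(2*m-1))^2)" using assms by simp
  then show ?thesis using P eq assms(3) by simp
qed

lemma split_sum:
  fixes f :: "nat \<Rightarrow> real"
  shows "(\<Sum>i<4*m+1. f i) = (\<Sum>i<2*m. f i) + f (2*m) + (\<Sum>i<2*m. f (4*m - i))"
proof -
  have u: "{..<4*m+1} = {..<2*m} \<union> insert (2*m) {2*m<..4*m}" by auto
  have r: "(\<Sum>i<2*m. f (4*m - i)) = (\<Sum>i\<in>{2*m<..4*m}. f i)"
    by (rule sum.reindex_bij_witness[where i="\<lambda>i. 4*m - i" and j="\<lambda>i. 4*m - i"]) auto
  show ?thesis unfolding u r by (subst sum.union_disjoint) auto
qed

lemma key:
  assumes "0 < b" "b < a" "x (2*m) = 0"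
  shows "(a-b)^2 * (\<Sum>i<4*m+1. x i ^2) \<le> (\<Sum>i<4*m+1. (Rf a b m x i - (a+b) * x i)^2)"
proof -
  define x' where "x' = (\<lambda>j. x (4*m - j))"
  have x'c: "x' (2*m) = 0" unfolding x'_def using assms by simp
  have L: "(a-b)^2 * (\<Sum>i<2*m. x i ^2) \<le> (\<Sum>i<2*m. (Rf a b m x i - (a+b) * x i)^2)"
    using left_half assms by blast
  have R0: "(a-b)^2 * (\<Sum>i<2*m. x' i ^2) \<le> (\<Sum>i<2*m. (Rf a b m x' i - (a+b) * x' i)^2)"
    using left_half assms x'c by blast
  have "(\<Sum>i<2*m. (Rf a b m x' i - (a+b) * x' i)^2) = (\<Sum>i<2*m. (Rf a b m x (4*m-i) - (a+b) * x (4*m-i))^2)"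
    by (rule sum.cong) (auto simp: Rf_refl x'_def)
  then have R: "(a-b)^2 * (\<Sum>i<2*m. x (4*m-i) ^2) \<le> (\<Sum>i<2*m. (Rf a b m x (4*m-i) - (a+b) * x (4*m-i))^2)"
    using R0 unfolding x'_def by simp
  show ?thesis
    unfolding split_sum[of "\<lambda>i. x i ^2" m] split_sum[of "\<lambda>i. (Rf a b m x i - (a+b) * x i)^2" m]
  proof -
    have sq: "0 \<le> (Rf a b m x (2*m) - (a+b) * x (2*m))^2" by simp
    have d: "(a-b)^2 * ((\<Sum>i<2*m. x i ^2) + x (2*m) ^2 + (\<Sum>i<2*m. x (4*m-i) ^2))
      = (a-b)^2 * (\<Sum>i<2*m. x i ^2) + (a-b)^2 * (\<Sum>i<2*m. x (4*m-i) ^2)"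
      using assms(3) by (simp add: algebra_simps)
    show "(a-b)^2 * ((\<Sum>i<2*m. x i ^2) + x (2*m) ^2 + (\<Sum>i<2*m. x (4*m-i) ^2))
      \<le> (\<Sum>i<2*m. (Rf a b m x i - (a+b) * x i)^2) + (Rf a b m x (2*m) - (a+b) * x (2*m))^2
         + (\<Sum>i<2*m. (Rf a b m x (4*m-i) - (a+b) * x (4*m-i))^2)"
      unfolding d using L R sq by linarith
  qed
qed

lemma ce_sym: "ce a b m i j = ce a b m j i" unfolding ce_def by auto

lemma Rf_symm: "(\<Sum>i<4*m+1. Rf a b m x i * y i) = (\<Sum>i<4*m+1. x i * Rf a b m y i)"
proof -
  have "(\<Sum>i<4*m+1. Rf a b m x i * y i) = (\<Sum>i<4*m+1. \<Sum>j<4*m+1. ce a b m i j * x j * y i)"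
    unfolding Rf_def sum_distrib_right ..
  also have "\<dots> = (\<Sum>j<4*m+1. \<Sum>i<4*m+1. ce a b m i j * x j * y i)" by (rule sum.swap)
  also have "\<dots> = (\<Sum>j<4*m+1. x j * Rf a b m y j)"
    unfolding Rf_def sum_distrib_left by (intro sum.cong refl) (simp add: ce_sym mult_ac)
  finally show ?thesis .
qed

lemma Rf_lin: "Rf a b m (\<lambda>i. c * x i - d * y i) j = c * Rf a b m x j - d * Rf a b m y j"
  unfolding Rf_def by (simp add: sum_subtractf sum_distrib_left algebra_simps)

lemma sq_lt:
  fixes a b l :: real
  assumes "2*b < l" "l < 2*a"
  shows "(l - (a+b))^2 < (a-b)^2"
proof -
  have "(a-b)^2 - (l - (a+b))^2 = ((a-b) - (l-(a+b))) * ((a-b) + (l - (a+b)))"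
    by (simp add: power2_eq_square algebra_simps)
  moreover have "0 < ((a-b) - (l-(a+b))) * ((a-b) + (l - (a+b)))"
    using assms by (intro mult_pos_pos) auto
  ultimately show ?thesis by linarith
qed

lemma pos_sumsq:
  fixes x :: "nat \<Rightarrow> real"
  assumes "i0 < n" "x i0 \<noteq> 0"
  shows "0 < (\<Sum>i<n. x i ^2)"
proof -
  have "x i0 ^2 \<le> (\<Sum>i<n. x i ^2)" by (rule member_le_sum) (use assms in auto)
  moreover have "0 < x i0 ^2" using assms by simp
  ultimately show ?thesis by linarith
qed

lemma eig_sq:
  assumes "\<forall>i<4*m+1. Rf a b m x i = l * x i"
  shows "(\<Sum>i<4*m+1. (Rf a b m x i - (a+b) * x i)^2) = (l - (a+b))^2 * (\<Sum>i<4*m+1. x i ^2)"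
  unfolding sum_distrib_left
  by (rule sum.cong) (use assms in \<open>auto simp: power2_eq_square algebra_simps\<close>)

lemma center_nonzero:
  assumes "0 < b" "b < a" "\<forall>i<4*m+1. Rf a b m x i = l * x i" "i0 < 4*m+1" "x i0 \<noteq> 0"
    "2*b < l" "l < 2*a"
  shows "x (2*m) \<noteq> 0"
proof
  assume c: "x (2*m) = 0"
  have "(a-b)^2 * (\<Sum>i<4*m+1. x i ^2) \<le> (l - (a+b))^2 * (\<Sum>i<4*m+1. x i ^2)"
    using key[where x=x, OF assms(1,2) c] eig_sq[OF assms(3)] by simp
  moreover have "0 < (\<Sum>i<4*m+1. x i ^2)" using pos_sumsq assms(4,5) by blast
  moreover have "(l - (a+b))^2 < (a-b)^2" using sq_lt assms(6,7) by blast
  ultimately show False by (meson mult_strict_right_mono not_le)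
qed

lemma at_most_one:
  assumes "0 < b" "b < a"
    and ex: "\<forall>i<4*m+1. Rf a b m x i = l * x i" "i0 < 4*m+1" "x i0 \<noteq> 0" "2*b < l" "l < 2*a"
    and ey: "\<forall>i<4*m+1. Rf a b m y i = mu * y i" "j0 < 4*m+1" "y j0 \<noteq> 0" "2*b < mu" "mu < 2*a"
  shows "l = mu"
proof (rule ccontr)
  assume ne: "l \<noteq> mu"
  let ?N = "4*m+1"
  have "l * (\<Sum>i<?N. x i * y i) = (\<Sum>i<?N. Rf a b m x i * y i)"
    unfolding sum_distrib_left by (rule sum.cong) (use ex in auto)
  also have "\<dots> = (\<Sum>i<?N. x i * Rf a b m y i)" by (rule Rf_symm)
  also have "\<dots> = mu * (\<Sum>i<?N. x i * y i)"
    unfolding sum_distrib_left by (rule sum.cong) (use ey in auto)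
  finally have orth: "(\<Sum>i<?N. x i * y i) = 0" using ne by simp
  define X where "X = x (2*m)"
  define Y where "Y = y (2*m)"
  have X: "X \<noteq> 0" unfolding X_def using center_nonzero[OF assms(1,2) ex] .
  have Y: "Y \<noteq> 0" unfolding Y_def using center_nonzero[OF assms(1,2) ey] .
  define z where "z = (\<lambda>i. Y * x i - X * y i)"
  have zc: "z (2*m) = 0" unfolding z_def X_def Y_def by simp
  define Sx where "Sx = (\<Sum>i<?N. x i ^2)"
  define Sy where "Sy = (\<Sum>i<?N. y i ^2)"
  have Sx: "0 < Sx" unfolding Sx_def using pos_sumsq ex(2,3) by blast
  have Sy: "0 \<le> Sy" unfolding Sy_def by (simp add: sum_nonneg)
  have "(\<Sum>i<?N. z i ^2) = (\<Sum>i<?N. Y^2 * x i^2 - 2*X*Y * (x i * y i) + X^2 * y i ^2)"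
    unfolding z_def by (rule sum.cong) (auto simp: power2_eq_square algebra_simps)
  also have "\<dots> = Y^2 * Sx - 2*X*Y*(\<Sum>i<?N. x i * y i) + X^2 * Sy"
    unfolding Sx_def Sy_def by (simp add: sum.distrib sum_subtractf sum_distrib_left del: sum.lessThan_Suc)
  also have "\<dots> = Y^2 * Sx + X^2 * Sy" unfolding orth by simp
  finally have zz: "(\<Sum>i<?N. z i ^2) = Y^2 * Sx + X^2 * Sy" .
  have "(\<Sum>i<?N. (Rf a b m z i - (a+b) * z i)^2)
     = (\<Sum>i<?N. (Y*(l-(a+b)))^2 * x i^2 - 2*(X*(mu-(a+b)))*(Y*(l-(a+b))) * (x i * y i) + (X*(mu-(a+b)))^2 * y i ^2)"
  proof (rule sum.cong)
    fix i assume "i \<in> {..<?N}"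
    then have i: "i < ?N" by simp
    have R: "Rf a b m z i = Y * (l * x i) - X * (mu * y i)"
      unfolding z_def Rf_lin using ex(1) ey(1) i by simp
    have zi: "z i = Y * x i - X * y i" unfolding z_def ..
    show "(Rf a b m z i - (a+b) * z i)^2 = (Y*(l-(a+b)))^2 * x i^2 - 2*(X*(mu-(a+b)))*(Y*(l-(a+b))) * (x i * y i) + (X*(mu-(a+b)))^2 * y i ^2"
      unfolding R zi by (simp add: power2_eq_square algebra_simps)
  qed simp
  also have "\<dots> = (Y*(l-(a+b)))^2 * Sx - 2*(X*(mu-(a+b)))*(Y*(l-(a+b)))*(\<Sum>i<?N. x i * y i) + (X*(mu-(a+b)))^2 * Sy"
    unfolding Sx_def Sy_def by (simp add: sum.distrib sum_subtractf sum_distrib_left del: sum.lessThan_Suc)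
  also have "\<dots> = (l-(a+b))^2 * (Y^2 * Sx) + (mu-(a+b))^2 * (X^2 * Sy)"
    unfolding orth by (simp add: power_mult_distrib)
  finally have oz: "(\<Sum>i<?N. (Rf a b m z i - (a+b) * z i)^2) = (l-(a+b))^2 * (Y^2 * Sx) + (mu-(a+b))^2 * (X^2 * Sy)" .
  have K: "(a-b)^2 * (Y^2 * Sx + X^2 * Sy) \<le> (l-(a+b))^2 * (Y^2 * Sx) + (mu-(a+b))^2 * (X^2 * Sy)"
    using key[where x=z, OF assms(1,2) zc] zz oz by simp
  have p1: "0 < Y^2 * Sx" using Y Sx by simp
  have p2: "0 \<le> X^2 * Sy" using Sy by simp
  have l1: "(l-(a+b))^2 * (Y^2 * Sx) < (a-b)^2 * (Y^2 * Sx)"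
    using sq_lt[OF ex(4,5)] p1 by (rule mult_strict_right_mono)
  have l2: "(mu-(a+b))^2 * (X^2 * Sy) \<le> (a-b)^2 * (X^2 * Sy)"
    using sq_lt[OF ey(4,5)] p2 by (intro mult_right_mono) auto
  show False using K l1 l2 by (simp add: algebra_simps)
qed

lemma mat_vec:
  assumes "v \<in> carrier_vec (4*m+1)" "i < 4*m+1"
  shows "(defect_cap s1 s2 m *\<^sub>v v) $ i = Rf (1/s1) (1/s2) m (\<lambda>j. v $ j) i"
  using assms unfolding defect_cap_def Rf_def scalar_prod_def
  by (simp add: cap_ce atLeast0LessThan scalar_prod_def del: sum.lessThan_Suc)

lemma eig_to_fun:
  assumes "eigenvalue (defect_cap s1 s2 m) l"
  shows "\<exists>x i0. (\<forall>i<4*m+1. Rf (1/s1) (1/s2) m x i = l * x i) \<and> i0 < 4*m+1 \<and> x i0 \<noteq> 0"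
proof -
  obtain v where v: "v \<in> carrier_vec (4*m+1)" "v \<noteq> 0\<^sub>v (4*m+1)" "defect_cap s1 s2 m *\<^sub>v v = l \<cdot>\<^sub>v v"
    using assms unfolding eigenvalue_def eigenvector_def by (auto simp: defect_cap_def)
  have E: "\<forall>i<4*m+1. Rf (1/s1) (1/s2) m (\<lambda>j. v $ j) i = l * v $ i"
  proof (intro allI impI)
    fix i assume i: "i < 4*m+1"
    have "(defect_cap s1 s2 m *\<^sub>v v) $ i = (l \<cdot>\<^sub>v v) $ i" using v(3) by simp
    then show "Rf (1/s1) (1/s2) m (\<lambda>j. v $ j) i = l * v $ i"
      using mat_vec[OF v(1) i] i v(1) by simp
  qed
  have "\<exists>i0<4*m+1. v $ i0 \<noteq> 0"
  proof (rule ccontr)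
    assume "\<not> ?thesis"
    then have "v = 0\<^sub>v (4*m+1)" using v(1) by (intro eq_vecI) auto
    then show False using v(2) by simp
  qed
  then show ?thesis using E by blast
qed

lemma fun_to_eig:
  assumes "\<forall>i<4*m+1. Rf (1/s1) (1/s2) m x i = l * x i" "i0 < 4*m+1" "x i0 \<noteq> 0"
  shows "eigenvalue (defect_cap s1 s2 m) l"
proof -
  define v where "v = vec (4*m+1) x"
  have v: "v \<in> carrier_vec (4*m+1)" unfolding v_def by simp
  have "v \<noteq> 0\<^sub>v (4*m+1)"
  proof
    assume "v = 0\<^sub>v (4*m+1)"
    then have "v $ i0 = 0" using assms(2) by simp
    then show False using assms(2,3) unfolding v_def by simp
  qed
  moreover have "defect_cap s1 s2 m *\<^sub>v v = l \<cdot>\<^sub>v v"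
  proof (rule eq_vecI)
    fix i assume "i < dim_vec (l \<cdot>\<^sub>v v)"
    then have i: "i < 4*m+1" unfolding v_def by simp
    have "(\<lambda>j. v $ j) = (\<lambda>j. v $ j)" ..
    have "Rf (1/s1) (1/s2) m (\<lambda>j. v $ j) i = Rf (1/s1) (1/s2) m x i"
      unfolding Rf_def v_def by (rule sum.cong) auto
    then show "(defect_cap s1 s2 m *\<^sub>v v) $ i = (l \<cdot>\<^sub>v v) $ i"
      using mat_vec[OF v i] assms(1) i unfolding v_def by simp
  qed (simp add: defect_cap_def v_def)
  ultimately show ?thesis unfolding eigenvalue_def eigenvector_def
    using v by (auto simp: defect_cap_def)
qed

definition ww :: "real \<Rightarrow> real \<Rightarrow> nat \<Rightarrow> real" where
  "ww a b n = (if odd n then a else b)"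

fun uu :: "real \<Rightarrow> real \<Rightarrow> real \<Rightarrow> nat \<Rightarrow> real" where
  "uu a b l 0 = 1"
| "uu a b l (Suc 0) = 1"
| "uu a b l (Suc (Suc n)) = ((a+b-l) * uu a b l (Suc n) - ww a b n * uu a b l n) / ww a b (Suc n)"

lemma ww_pos: "0 < a \<Longrightarrow> 0 < b \<Longrightarrow> 0 < ww a b n" unfolding ww_def by auto

lemma uu_rec:
  assumes "0 < a" "0 < b"
  shows "ww a b (Suc n) * uu a b l (Suc (Suc n)) = (a+b-l) * uu a b l (Suc n) - ww a b n * uu a b l n"
  using ww_pos[OF assms, of "Suc n"] by simp

lemma uu_cont:
  assumes "0 < a" "0 < b"
  shows "continuous_on S (\<lambda>l. uu a b l n)"
proof -
  have "continuous_on S (\<lambda>l. uu a b l n) \<and> continuous_on S (\<lambda>l. uu a b l (Suc n))"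
  proof (induction n)
    case 0
    then show ?case by simp
  next
    case (Suc n)
    have "continuous_on S (\<lambda>l. ((a+b-l) * uu a b l (Suc n) - ww a b n * uu a b l n) / ww a b (Suc n))"
      using Suc ww_pos[OF assms, of "Suc n"] by (intro continuous_intros) auto
    then show ?case using Suc by simp
  qed
  then show ?thesis by blast
qed

definition vv :: "real \<Rightarrow> real \<Rightarrow> nat \<Rightarrow> real \<Rightarrow> nat \<Rightarrow> real" where
  "vv a b m l j = (if j \<le> 2*m then uu a b l (Suc j) else uu a b l (4*m+1-j))"

lemma vv_sym: "j \<le> 4*m \<Longrightarrow> vv a b m l (4*m - j) = vv a b m l j"
  unfolding vv_def by (cases "j = 2*m") (auto simp: Suc_diff_le)

lemma Rf_cong: "(\<And>j. j < 4*m+1 \<Longrightarrow> x j = y j) \<Longrightarrow> Rf a b m x i = Rf a b m y i"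
  unfolding Rf_def by (rule sum.cong) auto

lemma eig_construct:
  assumes "0 < b" "b < a" "1 \<le> m" and cond: "(2*b - l) * uu a b l (2*m+1) = 2*b * uu a b l (2*m)"
  shows "\<forall>i<4*m+1. Rf a b m (vv a b m l) i = l * vv a b m l i"
proof -
  have a0: "0 < a" using assms by simp
  let ?v = "vv a b m l"
  have left: "Rf a b m ?v i = l * ?v i" if i: "i \<le> 2*m" for i
  proof -
    consider "i = 0" | "0 < i \<and> i < 2*m" | "i = 2*m" using i by linarith
    then show ?thesis
    proof cases
      case 1
      have r: "Rf a b m ?v 0 = ce a b m 0 0 * ?v 0 + bnd a b m 0 * ?v 1" using Rf_eq[of 0 m a b ?v] assms by simp
      have "ce a b m 0 0 = a" "bnd a b m 0 = -a" using assms unfolding ce_def bnd_def by auto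
      moreover have "?v 0 = 1" "?v 1 = uu a b l 2" using assms unfolding vv_def by (auto simp: numeral_2_eq_2)
      moreover have "a * uu a b l 2 = (a+b-l) - b" using uu_rec[OF a0 assms(1), of 0 l] by (simp add: ww_def numeral_2_eq_2)
      ultimately show ?thesis using 1 r by (simp add: algebra_simps)
    next
      case 2
      have r: "Rf a b m ?v i = bnd a b m (i-1) * ?v (i-1) + ce a b m i i * ?v i + bnd a b m i * ?v (Suc i)"
        using Rf_eq[of i m a b ?v] assms 2 by simp
      have "bnd a b m (i-1) = - ww a b i" "bnd a b m i = - ww a b (Suc i)" "ce a b m i i = a + b"
        using 2 unfolding bnd_def ww_def ce_def by auto
      moreover have "?v (i-1) = uu a b l i" "?v i = uu a b l (Suc i)" "?v (Suc i) = uu a b l (Suc (Suc i))"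
        using 2 unfolding vv_def by auto
      ultimately have "Rf a b m ?v i = - ww a b i * uu a b l i + (a+b) * uu a b l (Suc i) - ww a b (Suc i) * uu a b l (Suc (Suc i))"
        using r by (simp del: uu.simps)
      moreover note uu_rec[OF a0 assms(1), of i l]
      moreover have "?v i = uu a b l (Suc i)" using 2 unfolding vv_def by auto
      ultimately show ?thesis by (simp del: uu.simps add: algebra_simps)
    next
      case 3
      have r: "Rf a b m ?v i = bnd a b m (i-1) * ?v (i-1) + ce a b m i i * ?v i + bnd a b m i * ?v (Suc i)"
        using Rf_eq[of i m a b ?v] assms 3 by simp
      have o: "odd (2*m - 1)" using assms by simp
      have "bnd a b m (i-1) = - b" "bnd a b m i = - b" "ce a b m i i = 2*b"
        using 3 assms o unfolding bnd_def ce_def by auto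
      moreover have "?v (i-1) = uu a b l (2*m)" "?v i = uu a b l (2*m+1)" "?v (Suc i) = uu a b l (2*m)"
        using 3 assms unfolding vv_def by auto
      ultimately show ?thesis using r 3 cond by (simp add: algebra_simps)
    qed
  qed
  show ?thesis
  proof (intro allI impI)
    fix i assume i: "i < 4*m+1"
    show "Rf a b m ?v i = l * ?v i"
    proof (cases "i \<le> 2*m")
      case True
      then show ?thesis using left by blast
    next
      case False
      define i' where "i' = 4*m - i"
      have i': "i' \<le> 2*m" "i = 4*m - i'" "i' < 4*m+1" using False i unfolding i'_def by auto
      have "Rf a b m ?v i = Rf a b m (\<lambda>j. ?v (4*m - j)) i'"
        unfolding i'(2) by (rule Rf_refl) (use i' in auto)
      also have "\<dots> = Rf a b m ?v i'" by (rule Rf_cong) (simp add: vv_sym)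
      also have "\<dots> = l * ?v i'" using left i' by blast
      also have "\<dots> = l * ?v i" using vv_sym[of i' m a b l] i' by simp
      finally show ?thesis .
    qed
  qed
qed

lemma uu_2a:
  assumes "0 < a" "0 < b"
  shows "uu a b (2*a) (2*k) = (-1)^k \<and> uu a b (2*a) (2*k+1) = (-1)^k"
proof (induction k)
  case 0
  then show ?case by simp
next
  case (Suc k)
  have e1: "uu a b (2*a) (2*Suc k) = ((a+b-2*a) * uu a b (2*a) (2*k+1) - ww a b (2*k) * uu a b (2*a) (2*k)) / ww a b (2*k+1)"
    by (simp add: numeral_2_eq_2)
  have e2: "uu a b (2*a) (2*Suc k+1) = ((a+b-2*a) * uu a b (2*a) (2*Suc k) - ww a b (2*k+1) * uu a b (2*a) (2*k+1)) / ww a b (2*k+2)"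
    by (simp add: numeral_2_eq_2)
  have w: "ww a b (2*k) = b" "ww a b (2*k+1) = a" "ww a b (2*k+2) = b" unfolding ww_def by auto
  have p: "uu a b (2*a) (2*k) = (-1)^k" and q: "uu a b (2*a) (2*k+1) = (-1)^k" using Suc by auto
  have A: "uu a b (2*a) (2*Suc k) = (-1)^Suc k"
    unfolding e1 w p q using assms by (simp add: field_simps)
  have B: "uu a b (2*a) (2*Suc k+1) = (-1)^Suc k"
    unfolding e2 w A q using assms by (simp add: field_simps)
  show ?case using A B by simp
qed

lemma uu_2b:
  assumes "0 < a" "0 < b"
  shows "uu a b (2*b) (2*k) = (-1)^k * (1 - 2*k*((a-b)/a)) \<and> uu a b (2*b) (2*k+1) = (-1)^k * (1 + 2*k*((a-b)/a))"
proof (induction k)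
  case 0
  then show ?case by simp
next
  case (Suc k)
  have e1: "uu a b (2*b) (2*Suc k) = ((a+b-2*b) * uu a b (2*b) (2*k+1) - ww a b (2*k) * uu a b (2*b) (2*k)) / ww a b (2*k+1)"
    by (simp add: numeral_2_eq_2)
  have e2: "uu a b (2*b) (2*Suc k+1) = ((a+b-2*b) * uu a b (2*b) (2*Suc k) - ww a b (2*k+1) * uu a b (2*b) (2*k+1)) / ww a b (2*k+2)"
    by (simp add: numeral_2_eq_2)
  have w: "ww a b (2*k) = b" "ww a b (2*k+1) = a" "ww a b (2*k+2) = b" unfolding ww_def by auto
  have p: "uu a b (2*b) (2*k) = (-1)^k * (1 - 2*k*((a-b)/a))"
    and q: "uu a b (2*b) (2*k+1) = (-1)^k * (1 + 2*k*((a-b)/a))" using Suc by auto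
  have A: "uu a b (2*b) (2*Suc k) = (-1)^Suc k * (1 - 2*(Suc k)*((a-b)/a))"
    unfolding e1 w p q using assms by (simp add: field_simps)
  have B: "uu a b (2*b) (2*Suc k+1) = (-1)^Suc k * (1 + 2*(Suc k)*((a-b)/a))"
    unfolding e2 w A q using assms by (simp add: field_simps)
  show ?case using A B by simp
qed

theorem mainTheorem7:
  fixes s1 s2 :: real
  assumes "0 < s1" and "s1 < s2"
  shows "(\<forall>m\<ge>1. card {ev. eigenvalue (defect_cap s1 s2 m) ev \<and> ev \<in> {2/s2<..<2/s1}} \<le> 1)
       \<and> (\<exists>M. \<forall>m\<ge>M. card {ev. eigenvalue (defect_cap s1 s2 m) ev \<and> ev \<in> {2/s2<..<2/s1}} = 1)"
proof -
  define a where "a = 1/s1"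
  define b where "b = 1/s2"
  have b0: "0 < b" unfolding b_def using assms by simp
  have ba: "b < a" unfolding a_def b_def using assms by (simp add: frac_less2)
  have a0: "0 < a" using b0 ba by simp
  have gap: "\<And>ev. ev \<in> {2/s2<..<2/s1} \<longleftrightarrow> 2*b < ev \<and> ev < 2*a"
    unfolding a_def b_def by simp
  define S where "S = (\<lambda>m. {ev. eigenvalue (defect_cap s1 s2 m) ev \<and> ev \<in> {2/s2<..<2/s1}})"
  have uniq: "x = y" if "x \<in> S m" "y \<in> S m" for m x y
  proof -
    from that have ex: "eigenvalue (defect_cap s1 s2 m) x" "2*b < x" "x < 2*a"
      and ey: "eigenvalue (defect_cap s1 s2 m) y" "2*b < y" "y < 2*a"
      unfolding S_def gap by auto
    obtain fx i0 where fx: "\<forall>i<4*m+1. Rf a b m fx i = x * fx i" "i0 < 4*m+1" "fx i0 \<noteq> 0"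
      using eig_to_fun[OF ex(1)] unfolding a_def b_def by blast
    obtain fy j0 where fy: "\<forall>i<4*m+1. Rf a b m fy i = y * fy i" "j0 < 4*m+1" "fy j0 \<noteq> 0"
      using eig_to_fun[OF ey(1)] unfolding a_def b_def by blast
    show ?thesis by (rule at_most_one[OF b0 ba fx ex(2,3) fy ey(2,3)])
  qed
  have card_le: "card (S m) \<le> 1" for m
  proof (cases "S m = {}")
    case True
    then show ?thesis by simp
  next
    case False
    then obtain x where x: "x \<in> S m" by blast
    then have "S m = {x}" using uniq by blast
    then show ?thesis by simp
  qed
  define r where "r = (a-b)/a"
  have r0: "0 < r" unfolding r_def using a0 ba by simp
  define M where "M = nat \<lceil>1/r\<rceil> + 1"
  have ex1: "card (S m) = 1" if mM: "m \<ge> M" for m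
  proof -
    have m1: "1 \<le> m" using mM unfolding M_def by simp
    have "real m > 1/r"
    proof -
      have "real m \<ge> real (nat \<lceil>1/r\<rceil>) + 1" using mM unfolding M_def by simp
      moreover have "real (nat \<lceil>1/r\<rceil>) \<ge> 1/r" by linarith
      ultimately show ?thesis by linarith
    qed
    then have mr: "1 < real m * r" using r0 by (simp add: field_simps)
    define g where "g = (\<lambda>l. (-1)^m * ((2*b - l) * uu a b l (2*m+1) - 2*b * uu a b l (2*m)))"
    have sgn: "(-1::real)^m * (-1)^m = 1" by (cases "even m") auto
    have ga: "g (2*a) = -2*a"
    proof -
      have "uu a b (2*a) (2*m) = (-1)^m" "uu a b (2*a) (2*m+1) = (-1)^m" using uu_2a[OF a0 b0] by auto
      then have "g (2*a) = -2*a * ((-1)^m * (-1)^m)" unfolding g_def by (simp add: algebra_simps)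
      then show ?thesis using sgn by simp
    qed
    have gb: "g (2*b) = 2*b * (2*m*r - 1)"
    proof -
      have u: "uu a b (2*b) (2*m) = (-1)^m * (1 - 2*m*r)" using uu_2b[OF a0 b0] unfolding r_def by auto
      have "g (2*b) = 2*b * (2*m*r - 1) * ((-1)^m * (-1)^m)" unfolding g_def u by (simp add: algebra_simps)
      then show ?thesis using sgn by simp
    qed
    have gb0: "0 < g (2*b)" unfolding gb using b0 mr by simp
    have cont: "continuous_on {2*b..2*a} g"
      unfolding g_def using uu_cont[OF a0 b0, of "{2*b..2*a}" "2*m+1"] uu_cont[OF a0 b0, of "{2*b..2*a}" "2*m"]
      by (intro continuous_intros) auto
    obtain l where l: "2*b \<le> l" "l \<le> 2*a" "g l = 0"
      using IVT2'[of g "2*a" 0 "2*b", OF _ _ _ cont] ga gb0 a0 ba by force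
    have lb: "2*b < l" using l gb0 by (cases "l = 2*b") auto
    have la: "l < 2*a" using l ga a0 by (cases "l = 2*a") auto
    have cond: "(2*b - l) * uu a b l (2*m+1) = 2*b * uu a b l (2*m)"
      using l(3) unfolding g_def by simp
    have E: "\<forall>i<4*m+1. Rf a b m (vv a b m l) i = l * vv a b m l i"
      by (rule eig_construct[OF b0 ba m1 cond])
    have v0: "vv a b m l 0 = 1" unfolding vv_def by simp
    have "eigenvalue (defect_cap s1 s2 m) l"
      by (rule fun_to_eig[of m s1 s2 "vv a b m l" l 0]) (use E v0 in \<open>auto simp: a_def b_def\<close>)
    then have "l \<in> S m" unfolding S_def gap using lb la by simp
    then have "S m = {l}" using uniq by blast
    then show ?thesis by simp
  qed
  show ?thesis using card_le ex1 unfolding S_def by blast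
qed

end
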